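(* Let $X$ be a random variable with mean zero, finite variance $\sigma^2>0$ and density $f_X=e^{-\varphi}$ with $\varphi$ differentiable, and suppose there are $x_l<0<x_r$ such that 1. $\varphi'(x)\le x/\sigma^2$ for $x\le x_l$, 2. $\varphi'(x)\ge x/\sigma^2$ for $x\ge x_r$. Let $X^*$ have the zero bias distribution of $X$, with density $f_{X^*}$. Then $f_{X^*}(x)\le f_X(x)$ for all $x\in(-\infty,x_l)\cup(x_r,\infty)$. If in addition $\mathbb{E}X^3=0$ and $f_X(x)\le f_{X^*}(x)$ for every $x\in(x_l,x_r)$, then $X^*$ is smaller than $X$ in the convex order.
   Context: Zero bias transform: for $X$ with mean zero and finite variance $\sigma^2$, $X^*$ has the zero bias distribution of $X$ if $\mathbb{E}[Xf(X)]=\sigma^2\mathbb{E}[f'(X^* )]$ for all absolutely continuous $f$ for which the expectations exist; $X^*$ is absolutely continuous with density $f_{X^*}(t)=\sigma^{-2}\mathbb{E}[X\mathbb{I}_{X>t}]=-\sigma^{-2}\mathbb{E}[X\mathbb{I}_{X\le t}]$. Convex order: $U$ is smaller than $V$ in the convex order if $\mathbb{E}g(U)\le\mathbb{E}g(V)$ for every convex $g$ with both expectations finite. *)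

theory Defs
  imports "HOL-Probability.Probability"
begin

definition dens_var :: "(real \<Rightarrow> real) \<Rightarrow> real" where
  "dens_var f = (\<integral>x. x\<^sup>2 * f x \<partial>lborel)"

definition zero_bias_density :: "(real \<Rightarrow> real) \<Rightarrow> real \<Rightarrow> real" where
  "zero_bias_density f t =
     (\<integral>x. indicator {t<..} x * (x * f x) \<partial>lborel) / dens_var f"

definition convex_order_le :: "real measure \<Rightarrow> real measure \<Rightarrow> bool" where
  "convex_order_le M N \<longleftrightarrow>
     (\<forall>g::real \<Rightarrow> real. convex_on UNIV g \<longrightarrow> integrable M g \<longrightarrow> integrable N g \<longrightarrow>
        integral\<^sup>L M g \<le> integral\<^sup>L N g)"

end

theory Submission
  imports Defs
begin

definition W :: "(real \<Rightarrow> real) \<Rightarrow> real \<Rightarrow> real \<Rightarrow> real" where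
 "W f t x = \<bar>x\<bar> * f x * (indicator {0..<x} t + indicator {x..<0} t)"

lemma W_meas:
  assumes [measurable]: "f \<in> borel_measurable lborel"
  shows "case_prod (W f) \<in> borel_measurable (lborel \<Otimes>\<^sub>M lborel)"
proof -
  have "case_prod (W f) = (\<lambda>p. \<bar>snd p\<bar> * f (snd p) * ((if 0 \<le> fst p \<and> fst p < snd p then 1 else 0) + (if snd p \<le> fst p \<and> fst p < 0 then 1 else 0)))"
    by (auto simp: W_def indicator_def fun_eq_iff)
  also have "\<dots> \<in> borel_measurable (lborel \<Otimes>\<^sub>M lborel)"
    by measurable
  finally show ?thesis .
qed

lemma W_nonneg: "(\<And>x. 0 \<le> f x) \<Longrightarrow> 0 \<le> W f t x"
  by (auto simp: W_def indicator_def)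

lemma tonelli_W:
  assumes [measurable]: "f \<in> borel_measurable lborel" "g \<in> borel_measurable lborel"
    and fnn: "\<And>x. 0 \<le> f x"
  shows "(\<integral>\<^sup>+t. g t * (\<integral>\<^sup>+x. ennreal (W f t x) \<partial>lborel) \<partial>lborel) =
    (\<integral>\<^sup>+x. ennreal (\<bar>x\<bar> * f x) * ((\<integral>\<^sup>+t. g t * indicator {0..<x} t \<partial>lborel) + (\<integral>\<^sup>+t. g t * indicator {x..<0} t \<partial>lborel)) \<partial>lborel)"
proof -
  have m: "case_prod (W f) \<in> borel_measurable (lborel \<Otimes>\<^sub>M lborel)" by (rule W_meas) simp
  have "(\<integral>\<^sup>+t. g t * (\<integral>\<^sup>+x. ennreal (W f t x) \<partial>lborel) \<partial>lborel) =
        (\<integral>\<^sup>+t. (\<integral>\<^sup>+x. g t * ennreal (W f t x) \<partial>lborel) \<partial>lborel)"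
    by (intro nn_integral_cong nn_integral_cmult[symmetric]) (use m in measurable)
  also have "\<dots> = (\<integral>\<^sup>+x. (\<integral>\<^sup>+t. g t * ennreal (W f t x) \<partial>lborel) \<partial>lborel)"
    by (subst lborel_pair.Fubini') (use m in measurable)
  also have "\<dots> = (\<integral>\<^sup>+x. ennreal (\<bar>x\<bar> * f x) * ((\<integral>\<^sup>+t. g t * indicator {0..<x} t \<partial>lborel) + (\<integral>\<^sup>+t. g t * indicator {x..<0} t \<partial>lborel)) \<partial>lborel)"
  proof (intro nn_integral_cong)
    fix x :: real
    have "(\<integral>\<^sup>+t. g t * ennreal (W f t x) \<partial>lborel) = (\<integral>\<^sup>+t. ennreal (\<bar>x\<bar> * f x) * (g t * indicator {0..<x} t + g t * indicator {x..<0} t) \<partial>lborel)"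
      using fnn[of x] by (intro nn_integral_cong) (auto simp: W_def indicator_def mult_ac)
    also have "\<dots> = ennreal (\<bar>x\<bar> * f x) * ((\<integral>\<^sup>+t. g t * indicator {0..<x} t \<partial>lborel) + (\<integral>\<^sup>+t. g t * indicator {x..<0} t \<partial>lborel))"
      by (subst nn_integral_cmult) (auto simp: nn_integral_add)
    finally show "(\<integral>\<^sup>+t. g t * ennreal (W f t x) \<partial>lborel) = \<dots>" .
  qed
  finally show ?thesis .
qed

lemma ind_one:
  "(\<integral>\<^sup>+t. 1 * indicator {0..<x} t \<partial>lborel) + (\<integral>\<^sup>+t. 1 * indicator {x..<0} t \<partial>lborel) = ennreal \<bar>x\<bar>"
  for x :: real
proof (cases "0 \<le> x")
  case True
  then show ?thesis by (simp add: nn_integral_indicator)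
next
  case False
  then show ?thesis by (simp add: nn_integral_indicator)
qed

lemma half_sq_int:
  assumes "0 \<le> x"
  shows "(\<integral>\<^sup>+t. ennreal (t * indicator {0..x} t) \<partial>lborel) = ennreal (x\<^sup>2 / 2)"
proof -
  have i: "integrable lborel (\<lambda>t. t * indicator {0..x} t)"
    by (rule borel_integrable_atLeastAtMost) auto
  have "(\<integral>\<^sup>+t. ennreal (t * indicator {0..x} t) \<partial>lborel) = ennreal (\<integral>t. t * indicator {0..x} t \<partial>lborel)"
    by (rule nn_integral_eq_integral[OF i]) (auto simp: indicator_def)
  also have "(\<integral>t. t * indicator {0..x} t \<partial>lborel) = (\<integral>t. t^1 * indicator {0..x} t \<partial>lborel)" by simp
  also have "\<dots> = x\<^sup>2 / 2" using integral_power[of 0 x 1] assms by (simp add: power2_eq_square)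
  finally show ?thesis .
qed

lemma ind_pos:
  "(\<integral>\<^sup>+t. ennreal (max t 0) * indicator {0..<x} t \<partial>lborel) + (\<integral>\<^sup>+t. ennreal (max t 0) * indicator {x..<0} t \<partial>lborel) = ennreal ((max x 0)\<^sup>2 / 2)"
  for x :: real
proof -
  have z: "(\<integral>\<^sup>+t. ennreal (max t 0) * indicator {x..<0} t \<partial>lborel) = 0"
    by (subst nn_integral_cong[where v="\<lambda>_. 0"]) (auto simp: indicator_def max_def)
  show ?thesis
  proof (cases "0 \<le> x")
    case True
    have "(\<integral>\<^sup>+t. ennreal (max t 0) * indicator {0..<x} t \<partial>lborel) = (\<integral>\<^sup>+t. ennreal (t * indicator {0..x} t) \<partial>lborel)"
      using AE_lborel_singleton[of x] by (intro nn_integral_cong_AE) (auto simp: indicator_def elim!: eventually_mono)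
    then show ?thesis using z True half_sq_int[OF True] by simp
  next
    case False
    have "(\<integral>\<^sup>+t. ennreal (max t 0) * indicator {0..<x} t \<partial>lborel) = 0"
      using False by (subst nn_integral_cong[where v="\<lambda>_. 0"]) (auto simp: indicator_def max_def)
    then show ?thesis using z False by simp
  qed
qed

lemma ind_neg:
  "(\<integral>\<^sup>+t. ennreal (max (-t) 0) * indicator {0..<x} t \<partial>lborel) + (\<integral>\<^sup>+t. ennreal (max (-t) 0) * indicator {x..<0} t \<partial>lborel) = ennreal ((max (-x) 0)\<^sup>2 / 2)"
  for x :: real
proof -
  have z: "(\<integral>\<^sup>+t. ennreal (max (-t) 0) * indicator {0..<x} t \<partial>lborel) = 0"
    by (subst nn_integral_cong[where v="\<lambda>_. 0"]) (auto simp: indicator_def max_def)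
  show ?thesis
  proof (cases "x \<le> 0")
    case True
    have i: "integrable lborel (\<lambda>t. (-t) * indicator {x..0} t)"
      by (rule borel_integrable_atLeastAtMost) auto
    have "(\<integral>\<^sup>+t. ennreal (max (-t) 0) * indicator {x..<0} t \<partial>lborel) = (\<integral>\<^sup>+t. ennreal ((-t) * indicator {x..0} t) \<partial>lborel)"
      by (intro nn_integral_cong) (auto simp: indicator_def max_def)
    also have "\<dots> = ennreal (\<integral>t. (-t) * indicator {x..0} t \<partial>lborel)"
      by (rule nn_integral_eq_integral[OF i]) (auto simp: indicator_def)
    also have "(\<integral>t. (-t) * indicator {x..0} t \<partial>lborel) = - (\<integral>t. t^1 * indicator {x..0} t \<partial>lborel)" by simp
    also have "\<dots> = x\<^sup>2 / 2" using integral_power[of x 0 1] True by (simp add: power2_eq_square)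
    finally have e: "(\<integral>\<^sup>+t. ennreal (max (-t) 0) * indicator {x..<0} t \<partial>lborel) = ennreal (x\<^sup>2 / 2)" .
    show ?thesis using z True e by (simp add: max_def)
  next
    case False
    have "(\<integral>\<^sup>+t. ennreal (max (-t) 0) * indicator {x..<0} t \<partial>lborel) = 0"
      using False by (subst nn_integral_cong[where v="\<lambda>_. 0"]) (auto simp: indicator_def max_def)
    then show ?thesis using z False by simp
  qed
qed



lemma right_tail:
  fixes f f' :: "real \<Rightarrow> real" and s t :: real
  assumes deriv: "\<And>x. (f has_real_derivative f' x) (at x)"
    and intx: "integrable lborel (\<lambda>x. x * f x)"
    and fnn: "\<And>x. 0 \<le> f x" and sp: "0 < s"
    and bound: "\<And>x. x \<ge> t \<Longrightarrow> x * f x \<le> - s * f' x"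
  shows "(\<integral>x. indicator {t..} x * (x * f x) \<partial>lborel) \<le> s * f t"
proof -
  have cf: "continuous_on UNIV f" using deriv
    by (meson DERIV_isCont continuous_at_imp_continuous_on)
  have si: "set_integrable lborel {t..} (\<lambda>x. x * f x)"
    unfolding set_integrable_def by (rule integrable_mult_indicator[OF _ intx]) simp
  have lim: "((\<lambda>b. set_lebesgue_integral lborel {t..b} (\<lambda>x. x * f x)) \<longlongrightarrow> set_lebesgue_integral lborel {t..} (\<lambda>x. x * f x)) at_top"
    by (rule tendsto_set_lebesgue_integral_at_top[OF _ si]) simp
  have ev: "eventually (\<lambda>b. set_lebesgue_integral lborel {t..b} (\<lambda>x. x * f x) \<le> s * f t) at_top"
    unfolding eventually_at_top_linorder
  proof (intro exI[of _ t] allI impI)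
    fix b assume tb: "b \<ge> t"
    have sib: "set_integrable lborel {t..b} (\<lambda>x. x * f x)"
      by (rule borel_integrable_atLeastAtMost') (intro continuous_intros continuous_on_subset[OF cf], auto)
    have e: "set_lebesgue_integral lborel {t..b} (\<lambda>x. x * f x) = integral {t..b} (\<lambda>x. x * f x)"
      and io: "(\<lambda>x. x * f x) integrable_on {t..b}"
      using set_borel_integral_eq_integral[OF sib] by auto
    have ftc: "((\<lambda>x. - s * f' x) has_integral ((- s * f b) - (- s * f t))) {t..b}"
    proof (rule fundamental_theorem_of_calculus[OF tb])
      fix x assume "x \<in> {t..b}"
      have "((\<lambda>x. - s * f x) has_real_derivative (- s * f' x)) (at x)"
        using deriv by (intro derivative_eq_intros) auto
      then show "((\<lambda>x. - s * f x) has_vector_derivative (- s * f' x)) (at x within {t..b})"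
        using has_real_derivative_iff_has_vector_derivative has_vector_derivative_at_within by blast
    qed
    have "integral {t..b} (\<lambda>x. x * f x) \<le> (- s * f b) - (- s * f t)"
      by (rule has_integral_le[OF integrable_integral[OF io] ftc]) (use bound in auto)
    also have "\<dots> \<le> s * f t" using fnn[of b] sp by simp
    finally show "set_lebesgue_integral lborel {t..b} (\<lambda>x. x * f x) \<le> s * f t" using e by simp
  qed
  have "set_lebesgue_integral lborel {t..} (\<lambda>x. x * f x) \<le> s * f t"
    by (rule tendsto_le[OF _ tendsto_const lim ev]) simp
  then show ?thesis by (simp add: set_lebesgue_integral_def)
qed

lemma left_tail:
  fixes f f' :: "real \<Rightarrow> real" and s t :: real
  assumes deriv: "\<And>x. (f has_real_derivative f' x) (at x)"
    and intx: "integrable lborel (\<lambda>x. x * f x)"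
    and fnn: "\<And>x. 0 \<le> f x" and sp: "0 < s"
    and bound: "\<And>x. x \<le> t \<Longrightarrow> - (x * f x) \<le> s * f' x"
  shows "(\<integral>x. indicator {..t} x * (- (x * f x)) \<partial>lborel) \<le> s * f t"
proof -
  have cf: "continuous_on UNIV f" using deriv
    by (meson DERIV_isCont continuous_at_imp_continuous_on)
  have si: "set_integrable lborel {..t} (\<lambda>x. - (x * f x))"
    unfolding set_integrable_def by (rule integrable_mult_indicator[OF _ integrable_minus[OF intx]]) simp
  have lim: "((\<lambda>a. set_lebesgue_integral lborel {a..t} (\<lambda>x. - (x * f x))) \<longlongrightarrow> set_lebesgue_integral lborel {..t} (\<lambda>x. - (x * f x))) at_bot"
    by (rule tendsto_set_lebesgue_integral_at_bot[OF _ si]) simp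
  have ev: "eventually (\<lambda>a. set_lebesgue_integral lborel {a..t} (\<lambda>x. - (x * f x)) \<le> s * f t) at_bot"
    unfolding eventually_at_bot_linorder
  proof (intro exI[of _ t] allI impI)
    fix a assume ta: "a \<le> t"
    have sib: "set_integrable lborel {a..t} (\<lambda>x. - (x * f x))"
      by (rule borel_integrable_atLeastAtMost') (intro continuous_intros continuous_on_subset[OF cf], auto)
    have e: "set_lebesgue_integral lborel {a..t} (\<lambda>x. - (x * f x)) = integral {a..t} (\<lambda>x. - (x * f x))"
      and io: "(\<lambda>x. - (x * f x)) integrable_on {a..t}"
      using set_borel_integral_eq_integral[OF sib] by auto
    have ftc: "((\<lambda>x. s * f' x) has_integral (s * f t - s * f a)) {a..t}"
    proof (rule fundamental_theorem_of_calculus[OF ta])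
      fix x assume "x \<in> {a..t}"
      have "((\<lambda>x. s * f x) has_real_derivative (s * f' x)) (at x)"
        using deriv by (intro derivative_eq_intros) auto
      then show "((\<lambda>x. s * f x) has_vector_derivative (s * f' x)) (at x within {a..t})"
        using has_real_derivative_iff_has_vector_derivative has_vector_derivative_at_within by blast
    qed
    have "integral {a..t} (\<lambda>x. - (x * f x)) \<le> s * f t - s * f a"
      by (rule has_integral_le[OF integrable_integral[OF io] ftc]) (use bound in auto)
    also have "\<dots> \<le> s * f t" using fnn[of a] sp by simp
    finally show "set_lebesgue_integral lborel {a..t} (\<lambda>x. - (x * f x)) \<le> s * f t" using e by simp
  qed
  have "set_lebesgue_integral lborel {..t} (\<lambda>x. - (x * f x)) \<le> s * f t"
    by (rule tendsto_le[OF _ tendsto_const lim ev]) simp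
  then show ?thesis by (simp add: set_lebesgue_integral_def)
qed


lemma convex_line:
  fixes g :: "real \<Rightarrow> real" and a b x :: real
  assumes cv: "convex_on UNIV g" and ab: "a < b"
  defines "L \<equiv> g a + (g b - g a) / (b - a) * (x - a)"
  shows "x \<le> a \<or> b \<le> x \<Longrightarrow> L \<le> g x" and "a \<le> x \<Longrightarrow> x \<le> b \<Longrightarrow> g x \<le> L"
proof -
  define m where "m = (g b - g a) / (b - a)"
  have m': "m = (g a - g b) / (a - b)" unfolding m_def using ab by (simp add: field_simps)
  have L: "L = g a + m * (x - a)" unfolding L_def m_def ..
  have L2: "L = g b + m * (x - b)" unfolding L m_def using ab by (simp add: field_simps)
  show "x \<le> a \<or> b \<le> x \<Longrightarrow> L \<le> g x"
  proof -
    assume h: "x \<le> a \<or> b \<le> x"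
    consider "x = a" | "x < a" | "x = b" | "b < x" using h ab by linarith
    then show ?thesis
    proof cases
      case 1 then show ?thesis by (simp add: L)
    next
      case 3 then show ?thesis by (simp add: L2)
    next
      case 2
      have "(g x - g b) / (x - b) \<le> (g a - g b) / (a - b)"
        using convex_on_slope_le(2)[OF cv _ _ 2 ab] by simp
      then have "(g x - g b) / (x - b) \<le> m" using m' by simp
      then have "m * (x - b) \<le> g x - g b" using 2 ab by (simp add: divide_le_eq)
      then show ?thesis using L2 by simp
    next
      case 4
      have "(g a - g b) / (a - b) \<le> (g a - g x) / (a - x)"
        using convex_on_slope_le(1)[OF cv _ _ ab 4] by simp
      then have "m \<le> (g x - g a) / (x - a)" using m' ab 4 by (smt (verit) minus_divide_divide)
      then have "m * (x - a) \<le> g x - g a" using 4 ab by (simp add: le_divide_eq)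
      then show ?thesis using L by simp
    qed
  qed
  show "a \<le> x \<Longrightarrow> x \<le> b \<Longrightarrow> g x \<le> L"
  proof -
    assume h: "a \<le> x" "x \<le> b"
    consider "x = a" | "x = b" | "a < x" "x < b" using h by linarith
    then show ?thesis
    proof cases
      case 1 then show ?thesis by (simp add: L)
    next
      case 2 then show ?thesis by (simp add: L2)
    next
      case 3
      have "(g a - g x) / (a - x) \<le> (g a - g b) / (a - b)"
        using convex_on_slope_le(1)[OF cv _ _ 3] by simp
      then have "(g x - g a) / (x - a) \<le> m" using m' ab 3 by (smt (verit) minus_divide_divide)
      then have "g x - g a \<le> m * (x - a)" using 3 by (simp add: divide_le_eq)
      then show ?thesis using L by simp
    qed
  qed
qed



locale zbset =
  fixes f :: "real \<Rightarrow> real"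
  assumes fm[measurable]: "f \<in> borel_measurable lborel" and fnn: "\<And>x. 0 \<le> f x"
    and int1: "integrable lborel f" and total: "(\<integral>x. f x \<partial>lborel) = 1"
    and intx: "integrable lborel (\<lambda>x. x * f x)" and mean0: "(\<integral>x. x * f x \<partial>lborel) = 0"
    and intx2: "integrable lborel (\<lambda>x. x\<^sup>2 * f x)" and varpos: "dens_var f > 0"
begin

lemma int_ind: "A \<in> sets lborel \<Longrightarrow> integrable lborel (\<lambda>x. indicator A x * (x * f x))"
  using integrable_mult_indicator[OF _ intx] by simp

lemma split_mean: "(\<integral>x. indicator {t<..} x * (x * f x) \<partial>lborel) = (\<integral>x. indicator {..t} x * (- (x * f x)) \<partial>lborel)"
proof -
  have "(\<integral>x. indicator {t<..} x * (x * f x) \<partial>lborel) + (\<integral>x. indicator {..t} x * (x * f x) \<partial>lborel)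
      = (\<integral>x. indicator {t<..} x * (x * f x) + indicator {..t} x * (x * f x) \<partial>lborel)"
    by (rule Bochner_Integration.integral_add[symmetric]) (auto intro: int_ind)
  also have "\<dots> = (\<integral>x. x * f x \<partial>lborel)"
    by (intro Bochner_Integration.integral_cong) (auto simp: indicator_def)
  finally show ?thesis using mean0 by simp
qed

lemma W_eq: "W f t x = (if 0 \<le> t then indicator {t<..} x * (x * f x) else indicator {..t} x * (- (x * f x)))"
  by (auto simp: W_def indicator_def)

lemma W_int: "integrable lborel (W f t)"
proof (cases "0 \<le> t")
  case True
  then show ?thesis using int_ind[of "{t<..}"] by (simp add: W_eq[abs_def])
next
  case False
  then show ?thesis using integrable_minus[OF int_ind[of "{..t}"]] by (simp add: W_eq[abs_def])
qed

lemma W_integral: "(\<integral>x. W f t x \<partial>lborel) = dens_var f * zero_bias_density f t"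
proof -
  have "(\<integral>x. W f t x \<partial>lborel) = (\<integral>x. indicator {t<..} x * (x * f x) \<partial>lborel)"
    by (cases "0 \<le> t") (simp_all add: W_eq split_mean)
  then show ?thesis using varpos by (simp add: zero_bias_density_def)
qed

lemma zb_eq: "zero_bias_density f t = (\<integral>x. W f t x \<partial>lborel) / dens_var f"
  using W_integral varpos by simp

lemma zb_nonneg: "0 \<le> zero_bias_density f t"
  unfolding zb_eq using varpos by (auto intro!: divide_nonneg_pos integral_nonneg_AE W_nonneg fnn)

lemma zb_meas[measurable]: "zero_bias_density f \<in> borel_measurable lborel"
proof -
  have m: "case_prod (W f) \<in> borel_measurable (lborel \<Otimes>\<^sub>M lborel)" by (rule W_meas) simp
  have "(\<lambda>t. \<integral>x. W f t x \<partial>lborel) \<in> borel_measurable lborel"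
    by (rule lborel.borel_measurable_lebesgue_integral[OF m])
  then show ?thesis unfolding zb_eq[abs_def] by simp
qed

lemma nn_zb:
  assumes [measurable]: "g \<in> borel_measurable lborel"
  shows "(\<integral>\<^sup>+t. g t * ennreal (zero_bias_density f t) \<partial>lborel) = ennreal (1 / dens_var f) * (\<integral>\<^sup>+t. g t * (\<integral>\<^sup>+x. ennreal (W f t x) \<partial>lborel) \<partial>lborel)"
proof -
  have m: "case_prod (W f) \<in> borel_measurable (lborel \<Otimes>\<^sub>M lborel)" by (rule W_meas) simp
  have e: "ennreal (zero_bias_density f t) = ennreal (1 / dens_var f) * (\<integral>\<^sup>+x. ennreal (W f t x) \<partial>lborel)" for t
  proof -
    have "(\<integral>\<^sup>+x. ennreal (W f t x) \<partial>lborel) = ennreal (\<integral>x. W f t x \<partial>lborel)"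
      by (rule nn_integral_eq_integral[OF W_int]) (auto intro: W_nonneg fnn)
    moreover have "0 \<le> (\<integral>x. W f t x \<partial>lborel)" by (auto intro!: integral_nonneg_AE W_nonneg fnn)
    ultimately show ?thesis using varpos by (simp add: zb_eq ennreal_mult[symmetric] divide_inverse mult.commute)
  qed
  have "(\<integral>\<^sup>+t. g t * ennreal (zero_bias_density f t) \<partial>lborel) = (\<integral>\<^sup>+t. ennreal (1 / dens_var f) * (g t * (\<integral>\<^sup>+x. ennreal (W f t x) \<partial>lborel)) \<partial>lborel)"
    by (intro nn_integral_cong) (simp add: e mult_ac)
  also have "\<dots> = ennreal (1 / dens_var f) * (\<integral>\<^sup>+t. g t * (\<integral>\<^sup>+x. ennreal (W f t x) \<partial>lborel) \<partial>lborel)"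
    by (rule nn_integral_cmult) (use m in measurable)
  finally show ?thesis .
qed

lemma zb_total: "has_bochner_integral lborel (zero_bias_density f) 1"
proof (rule has_bochner_integral_nn_integral)
  show "AE x in lborel. 0 \<le> zero_bias_density f x" by (simp add: zb_nonneg)
  have "(\<integral>\<^sup>+t. ennreal (zero_bias_density f t) \<partial>lborel) = (\<integral>\<^sup>+t. 1 * ennreal (zero_bias_density f t) \<partial>lborel)" by simp
  also have "\<dots> = ennreal (1 / dens_var f) * (\<integral>\<^sup>+t. 1 * (\<integral>\<^sup>+x. ennreal (W f t x) \<partial>lborel) \<partial>lborel)"
    by (rule nn_zb) simp
  also have "(\<integral>\<^sup>+t. 1 * (\<integral>\<^sup>+x. ennreal (W f t x) \<partial>lborel) \<partial>lborel) = (\<integral>\<^sup>+x. ennreal (\<bar>x\<bar> * f x) * ((\<integral>\<^sup>+t. 1 * indicator {0..<x} t \<partial>lborel) + (\<integral>\<^sup>+t. 1 * indicator {x..<0} t \<partial>lborel)) \<partial>lborel)"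
    by (rule tonelli_W) (simp_all add: fnn)
  also have "\<dots> = (\<integral>\<^sup>+x. ennreal (\<bar>x\<bar> * f x) * ennreal \<bar>x\<bar> \<partial>lborel)"
    by (simp only: ind_one)
  also have "(\<integral>\<^sup>+x. ennreal (\<bar>x\<bar> * f x) * ennreal \<bar>x\<bar> \<partial>lborel) = (\<integral>\<^sup>+x. ennreal (x\<^sup>2 * f x) \<partial>lborel)"
  proof (intro nn_integral_cong)
    fix x :: real
    have "\<bar>x\<bar> * f x * \<bar>x\<bar> = x\<^sup>2 * f x"
      by (metis abs_mult_self_eq mult.commute mult.left_commute power2_eq_square)
    then show "ennreal (\<bar>x\<bar> * f x) * ennreal \<bar>x\<bar> = ennreal (x\<^sup>2 * f x)"
      using fnn[of x] by (simp add: ennreal_mult[symmetric])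
  qed
  also have "\<dots> = ennreal (dens_var f)"
    unfolding dens_var_def by (rule nn_integral_eq_integral[OF intx2]) (auto intro!: mult_nonneg_nonneg fnn)
  finally show "(\<integral>\<^sup>+t. ennreal (zero_bias_density f t) \<partial>lborel) = ennreal 1"
    using varpos by (simp add: ennreal_mult[symmetric])
qed simp_all


lemma zb_mom_gen:
  fixes h :: "real \<Rightarrow> real" and A :: "real set"
  assumes i3: "integrable lborel (\<lambda>x. x^3 * f x)"
    and hm[measurable]: "h \<in> borel_measurable lborel" and hnn: "\<And>t. 0 \<le> h t"
    and A[measurable]: "A \<in> sets lborel"
    and ind: "\<And>x. (\<integral>\<^sup>+t. ennreal (h t) * indicator {0..<x} t \<partial>lborel) + (\<integral>\<^sup>+t. ennreal (h t) * indicator {x..<0} t \<partial>lborel) = ennreal ((h x)\<^sup>2 / 2)"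
    and pw: "\<And>x. \<bar>x\<bar> * (h x)\<^sup>2 = indicator A x * (c * x^3)"
  shows "has_bochner_integral lborel (\<lambda>t. h t * zero_bias_density f t) ((\<integral>x. indicator A x * (c * x^3 * f x) \<partial>lborel) / (2 * dens_var f))"
proof (rule has_bochner_integral_nn_integral)
  show "AE x in lborel. 0 \<le> h x * zero_bias_density f x" by (simp add: zb_nonneg hnn)
  have iA: "integrable lborel (\<lambda>x. indicator A x * (c * x^3 * f x))"
    using integrable_mult_indicator[OF A integrable_mult_left[OF i3, of c]] by (simp add: mult_ac)
  have pw2: "\<bar>x\<bar> * f x * ((h x)\<^sup>2 / 2) = indicator A x * (c * x^3 * f x) / 2" for x
    using pw[of x] by (simp add: field_simps)
  have nnA: "0 \<le> indicator A x * (c * x^3 * f x)" for x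
  proof -
    have e: "indicator A x * (c * x^3 * f x) = 2 * (\<bar>x\<bar> * f x * ((h x)\<^sup>2 / 2))" using pw2[of x] by linarith
    show ?thesis unfolding e by (simp add: fnn)
  qed
  show "0 \<le> (\<integral>x. indicator A x * (c * x^3 * f x) \<partial>lborel) / (2 * dens_var f)"
    using varpos by (auto intro!: divide_nonneg_pos integral_nonneg_AE nnA)
  have "(\<integral>\<^sup>+t. ennreal (h t * zero_bias_density f t) \<partial>lborel) = (\<integral>\<^sup>+t. ennreal (h t) * ennreal (zero_bias_density f t) \<partial>lborel)"
    by (intro nn_integral_cong) (simp add: ennreal_mult hnn zb_nonneg)
  also have "\<dots> = ennreal (1 / dens_var f) * (\<integral>\<^sup>+t. ennreal (h t) * (\<integral>\<^sup>+x. ennreal (W f t x) \<partial>lborel) \<partial>lborel)"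
    by (rule nn_zb) simp
  also have "(\<integral>\<^sup>+t. ennreal (h t) * (\<integral>\<^sup>+x. ennreal (W f t x) \<partial>lborel) \<partial>lborel) = (\<integral>\<^sup>+x. ennreal (\<bar>x\<bar> * f x) * ((\<integral>\<^sup>+t. ennreal (h t) * indicator {0..<x} t \<partial>lborel) + (\<integral>\<^sup>+t. ennreal (h t) * indicator {x..<0} t \<partial>lborel)) \<partial>lborel)"
    by (rule tonelli_W) (simp_all add: fnn)
  also have "\<dots> = (\<integral>\<^sup>+x. ennreal (indicator A x * (c * x^3 * f x) / 2) \<partial>lborel)"
  proof (intro nn_integral_cong)
    fix x :: real
    show "ennreal (\<bar>x\<bar> * f x) * ((\<integral>\<^sup>+t. ennreal (h t) * indicator {0..<x} t \<partial>lborel) + (\<integral>\<^sup>+t. ennreal (h t) * indicator {x..<0} t \<partial>lborel)) = ennreal (indicator A x * (c * x^3 * f x) / 2)"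
      unfolding ind pw2[symmetric] by (simp add: ennreal_mult[symmetric] fnn)
  qed
  also have "\<dots> = ennreal (\<integral>x. indicator A x * (c * x^3 * f x) / 2 \<partial>lborel)"
    by (rule nn_integral_eq_integral) (auto intro: iA nnA)
  finally show "(\<integral>\<^sup>+t. ennreal (h t * zero_bias_density f t) \<partial>lborel) = ennreal ((\<integral>x. indicator A x * (c * x^3 * f x) \<partial>lborel) / (2 * dens_var f))"
    using varpos by (simp add: ennreal_mult[symmetric] integral_nonneg_AE nnA)
qed simp


lemma zb_mom:
  assumes i3: "integrable lborel (\<lambda>x. x^3 * f x)" and m3: "(\<integral>x. x^3 * f x \<partial>lborel) = 0"
  shows "has_bochner_integral lborel (\<lambda>t. t * zero_bias_density f t) 0"
proof -
  have P: "has_bochner_integral lborel (\<lambda>t. max t 0 * zero_bias_density f t) ((\<integral>x. indicator {0..} x * (1 * x^3 * f x) \<partial>lborel) / (2 * dens_var f))"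
    by (rule zb_mom_gen[OF i3 _ _ _ ind_pos]) (auto simp: indicator_def max_def power2_eq_square power3_eq_cube)
  have N: "has_bochner_integral lborel (\<lambda>t. max (-t) 0 * zero_bias_density f t) ((\<integral>x. indicator {..<0} x * ((-1) * x^3 * f x) \<partial>lborel) / (2 * dens_var f))"
    by (rule zb_mom_gen[OF i3 _ _ _ ind_neg]) (auto simp: indicator_def max_def power2_eq_square power3_eq_cube)
  have iP: "integrable lborel (\<lambda>x. indicator {0..} x * (1 * x^3 * f x))"
    using integrable_mult_indicator[OF _ i3, of "{0..}"] by (simp add: mult_ac)
  have iN: "integrable lborel (\<lambda>x. indicator {..<0} x * ((-1) * x^3 * f x))"
    using integrable_mult_indicator[OF _ integrable_minus[OF i3], of "{..<0}"] by (simp add: mult_ac)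
  have "(\<integral>x. indicator {0..} x * (1 * x^3 * f x) \<partial>lborel) - (\<integral>x. indicator {..<0} x * ((-1) * x^3 * f x) \<partial>lborel)
     = (\<integral>x. indicator {0..} x * (1 * x^3 * f x) - indicator {..<0} x * ((-1) * x^3 * f x) \<partial>lborel)"
    by (rule Bochner_Integration.integral_diff[symmetric, OF iP iN])
  also have "\<dots> = (\<integral>x. x^3 * f x \<partial>lborel)"
    by (intro Bochner_Integration.integral_cong) (auto simp: indicator_def)
  finally have e: "(\<integral>x. indicator {0..} x * (1 * x^3 * f x) \<partial>lborel) / (2 * dens_var f) - (\<integral>x. indicator {..<0} x * ((-1) * x^3 * f x) \<partial>lborel) / (2 * dens_var f) = 0"
    using m3 by (simp add: add_divide_distrib[symmetric])
  have "(\<lambda>t. t * zero_bias_density f t) = (\<lambda>t. max t 0 * zero_bias_density f t - max (-t) 0 * zero_bias_density f t)"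
    by (auto simp: fun_eq_iff max_def algebra_simps)
  with has_bochner_integral_diff[OF P N] e show ?thesis by simp
qed


lemma convex_part:
  assumes i3: "integrable lborel (\<lambda>x. x^3 * f x)" and m3: "(\<integral>x. x^3 * f x \<partial>lborel) = 0"
    and lr: "xl < xr"
    and mid: "\<And>x. xl < x \<Longrightarrow> x < xr \<Longrightarrow> f x \<le> zero_bias_density f x"
    and tl: "\<And>x. x < xl \<or> xr < x \<Longrightarrow> zero_bias_density f x \<le> f x"
  shows "convex_order_le (density lborel (\<lambda>x. ennreal (zero_bias_density f x))) (density lborel (\<lambda>x. ennreal (f x)))"
  unfolding convex_order_le_def
proof (intro allI impI)
  fix g :: "real \<Rightarrow> real"
  assume cv: "convex_on UNIV g"
    and iZd: "integrable (density lborel (\<lambda>x. ennreal (zero_bias_density f x))) g"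
    and iFd: "integrable (density lborel (\<lambda>x. ennreal (f x))) g"
  have gm[measurable]: "g \<in> borel_measurable lborel"
    using convex_on_continuous[OF open_UNIV cv] by (simp add: borel_measurable_continuous_onI)
  have iZ: "integrable lborel (\<lambda>x. zero_bias_density f x * g x)"
    using iZd by (subst (asm) integrable_density) (auto simp: zb_nonneg)
  have iF: "integrable lborel (\<lambda>x. f x * g x)"
    using iFd by (subst (asm) integrable_density) (auto simp: fnn)
  have eZ: "integral\<^sup>L (density lborel (\<lambda>x. ennreal (zero_bias_density f x))) g = (\<integral>x. zero_bias_density f x * g x \<partial>lborel)"
    by (subst integral_density) (auto simp: zb_nonneg)
  have eF: "integral\<^sup>L (density lborel (\<lambda>x. ennreal (f x))) g = (\<integral>x. f x * g x \<partial>lborel)"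
    by (subst integral_density) (auto simp: fnn)
  define m where "m = (g xr - g xl) / (xr - xl)"
  define L where "L x = g xl + m * (x - xl)" for x
  have H1: "has_bochner_integral lborel (\<lambda>x. f x * g x) (\<integral>x. f x * g x \<partial>lborel)"
    using iF by (simp add: has_bochner_integral_integrable)
  have H2: "has_bochner_integral lborel (\<lambda>x. zero_bias_density f x * g x) (\<integral>x. zero_bias_density f x * g x \<partial>lborel)"
    using iZ by (simp add: has_bochner_integral_integrable)
  have H3: "has_bochner_integral lborel f 1"
    using int1 total by (metis has_bochner_integral_integrable)
  have H4: "has_bochner_integral lborel (zero_bias_density f) 1" by (rule zb_total)
  have H5: "has_bochner_integral lborel (\<lambda>x. x * f x) 0"
    using intx mean0 by (metis has_bochner_integral_integrable)
  have H6: "has_bochner_integral lborel (\<lambda>x. x * zero_bias_density f x) 0" by (rule zb_mom[OF i3 m3])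
  have c: "(g xl - m * xl) * 1 - (g xl - m * xl) * 1 = 0" by simp
  have H: "has_bochner_integral lborel
     (\<lambda>x. (f x * g x - zero_bias_density f x * g x) - ((g xl - m * xl) * f x - (g xl - m * xl) * zero_bias_density f x) - (m * (x * f x) - m * (x * zero_bias_density f x)))
     ((\<integral>x. f x * g x \<partial>lborel) - (\<integral>x. zero_bias_density f x * g x \<partial>lborel) - ((g xl - m * xl) * 1 - (g xl - m * xl) * 1) - (m * 0 - m * 0))"
    by (intro has_bochner_integral_diff has_bochner_integral_mult_right H1 H2 H3 H4 H5 H6)
  have fe: "(\<lambda>x. (f x * g x - zero_bias_density f x * g x) - ((g xl - m * xl) * f x - (g xl - m * xl) * zero_bias_density f x) - (m * (x * f x) - m * (x * zero_bias_density f x)))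
     = (\<lambda>x. (f x - zero_bias_density f x) * (g x - L x))"
    by (auto simp: fun_eq_iff L_def algebra_simps)
  have pw: "0 \<le> (f x - zero_bias_density f x) * (g x - L x)" for x
  proof -
    have out: "x \<le> xl \<or> xr \<le> x \<Longrightarrow> L x \<le> g x"
      using convex_line(1)[OF cv lr, of x] by (simp add: L_def m_def)
    have inn: "xl \<le> x \<Longrightarrow> x \<le> xr \<Longrightarrow> g x \<le> L x"
      using convex_line(2)[OF cv lr, of x] by (simp add: L_def m_def)
    consider "x < xl \<or> xr < x" | "x = xl \<or> x = xr" | "xl < x \<and> x < xr" by linarith
    then show ?thesis
    proof cases
      case 1
      then show ?thesis using out tl[OF 1] by (intro mult_nonneg_nonneg) auto
    next
      case 2
      then have "L x = g x" using out inn lr by (smt (verit))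
      then show ?thesis by simp
    next
      case 3
      then show ?thesis using inn mid[of x] by (intro mult_nonpos_nonpos) auto
    qed
  qed
  have "0 \<le> (\<integral>x. f x * g x \<partial>lborel) - (\<integral>x. zero_bias_density f x * g x \<partial>lborel)"
  proof -
    have "0 \<le> (\<integral>x. (f x - zero_bias_density f x) * (g x - L x) \<partial>lborel)"
      by (rule Bochner_Integration.integral_nonneg) (rule pw)
    then show ?thesis using has_bochner_integral_integral_eq[OF H[unfolded fe]] by simp
  qed
  then show "integral\<^sup>L (density lborel (\<lambda>x. ennreal (zero_bias_density f x))) g \<le> integral\<^sup>L (density lborel (\<lambda>x. ennreal (f x))) g"
    using eZ eF by simp
qed

end

theorem corollary2p2:
  fixes f \<phi> \<phi>' :: "real \<Rightarrow> real" and xl xr :: real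
  assumes dens: "\<And>x. f x = exp (- \<phi> x)"
    and deriv: "\<And>x. (\<phi> has_real_derivative \<phi>' x) (at x)"
    and int1: "integrable lborel f" and total: "(\<integral>x. f x \<partial>lborel) = 1"
    and intx: "integrable lborel (\<lambda>x. x * f x)" and mean0: "(\<integral>x. x * f x \<partial>lborel) = 0"
    and intx2: "integrable lborel (\<lambda>x. x\<^sup>2 * f x)" and varpos: "dens_var f > 0"
    and xl: "xl < 0" and xr: "0 < xr"
    and left: "\<And>x. x \<le> xl \<Longrightarrow> \<phi>' x \<le> x / dens_var f"
    and right: "\<And>x. x \<ge> xr \<Longrightarrow> \<phi>' x \<ge> x / dens_var f"
  shows "(\<forall>x. (x < xl \<or> xr < x) \<longrightarrow> zero_bias_density f x \<le> f x)
    \<and> ((integrable lborel (\<lambda>x. x ^ 3 * f x) \<and> (\<integral>x. x ^ 3 * f x \<partial>lborel) = 0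
         \<and> (\<forall>x. xl < x \<and> x < xr \<longrightarrow> f x \<le> zero_bias_density f x))
       \<longrightarrow> convex_order_le (density lborel (\<lambda>x. ennreal (zero_bias_density f x)))
                          (density lborel (\<lambda>x. ennreal (f x))))"
proof -
  let ?s = "dens_var f"
  have fnn: "\<And>x. 0 \<le> f x" using dens by simp
  have fpos: "\<And>x. 0 < f x" using dens by simp
  have fm: "f \<in> borel_measurable lborel" by (rule borel_measurable_integrable[OF int1])
  interpret zbset f
    by unfold_locales (use fm fnn int1 total intx mean0 intx2 varpos in auto)
  have fe: "f = (\<lambda>x. exp (- \<phi> x))" using dens by auto
  have fd: "(f has_real_derivative (- \<phi>' x * f x)) (at x)" for x
  proof -
    have "((\<lambda>x. exp (- \<phi> x)) has_real_derivative (exp (- \<phi> x) * (- \<phi>' x))) (at x)"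
      using DERIV_fun_exp[OF DERIV_minus[OF deriv[of x]]] by simp
    then show ?thesis unfolding fe by (simp add: mult.commute)
  qed
  have P1: "zero_bias_density f x \<le> f x" if hx: "x < xl \<or> xr < x" for x
  proof (cases "xr < x")
    case True
    have b: "y * f y \<le> - ?s * (- \<phi>' y * f y)" if "y \<ge> x" for y
    proof -
      have "y / ?s \<le> \<phi>' y" using right[of y] that True by simp
      then have "y \<le> ?s * \<phi>' y" using varpos by (simp add: divide_le_eq mult.commute)
      then have "y * f y \<le> (?s * \<phi>' y) * f y" using fnn[of y] by (rule mult_right_mono)
      then show ?thesis by simp
    qed
    have I: "(\<integral>y. indicator {x..} y * (y * f y) \<partial>lborel) \<le> ?s * f x"
      by (rule right_tail[OF fd intx fnn varpos b])
    have "(\<integral>y. indicator {x<..} y * (y * f y) \<partial>lborel) \<le> (\<integral>y. indicator {x..} y * (y * f y) \<partial>lborel)"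
    proof (rule integral_mono)
      fix y :: real
      show "indicator {x<..} y * (y * f y) \<le> indicator {x..} y * (y * f y)"
        using True xr fnn[of y] by (auto simp: indicator_def)
    qed (auto intro: int_ind)
    with I have "(\<integral>y. indicator {x<..} y * (y * f y) \<partial>lborel) \<le> ?s * f x" by linarith
    then show ?thesis using varpos by (simp add: zero_bias_density_def divide_le_eq mult.commute)
  next
    case False
    with hx have xx: "x < xl" by simp
    have b: "- (y * f y) \<le> ?s * (- \<phi>' y * f y)" if "y \<le> x" for y
    proof -
      have "\<phi>' y \<le> y / ?s" using left[of y] that xx by simp
      then have "?s * \<phi>' y \<le> y" using varpos by (simp add: le_divide_eq mult.commute)
      then have "(?s * \<phi>' y) * f y \<le> y * f y" using fnn[of y] by (rule mult_right_mono)
      then show ?thesis by simp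
    qed
    have I: "(\<integral>y. indicator {..x} y * (- (y * f y)) \<partial>lborel) \<le> ?s * f x"
      by (rule left_tail[OF fd intx fnn varpos b])
    then have "(\<integral>y. indicator {x<..} y * (y * f y) \<partial>lborel) \<le> ?s * f x"
      by (simp only: split_mean)
    then show ?thesis using varpos by (simp add: zero_bias_density_def divide_le_eq mult.commute)
  qed
  show ?thesis
  proof (intro conjI allI impI)
    fix x assume "x < xl \<or> xr < x" then show "zero_bias_density f x \<le> f x" by (rule P1)
  next
    assume h: "integrable lborel (\<lambda>x. x ^ 3 * f x) \<and> (\<integral>x. x ^ 3 * f x \<partial>lborel) = 0
         \<and> (\<forall>x. xl < x \<and> x < xr \<longrightarrow> f x \<le> zero_bias_density f x)"
    show "convex_order_le (density lborel (\<lambda>x. ennreal (zero_bias_density f x)))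
                          (density lborel (\<lambda>x. ennreal (f x)))"
      by (rule convex_part[OF _ _ _ _ P1]) (use h xl xr in auto)
  qed
qed

end
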